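(* Let $\mathcal M$ be a category with chosen finite products which form a strict monoidal structure on $\mathcal M$. A simplicial object $X\colon\Delta^{op}\to\mathcal M$ is the reduced bar construction based on some monoid in $\mathcal M$ if and only if for every $n\ge0$ the arrow $p_n\colon X_n\to(X_1)^n$ is the identity (in particular $X_n=(X_1)^n$).
   Context: $\mathcal M$ has chosen finite products forming a strict monoidal structure: the chosen binary product is strictly associative on objects and arrows, and the chosen terminal object $A^0$ is a strict unit. $A^n$ denotes the $n$-fold chosen product. For arrows $g_j\colon C\to A_j$, $\langle g_1,\dots,g_n\rangle\colon C\to A_1\times\dots\times A_n$ is the induced arrow. A monoid is $(M,\mu\colon M\times M\to M,\eta\colon M^0\to M)$ with $\mu\circ(\mu\times 1_M)=\mu\circ(1_M\times\mu)$ and $\mu\circ(1_M\times\eta)=1_M=\mu\circ(\eta\times 1_M)$. $\Delta^{op}$ is the opposite of the category whose objects are $[n]=\{0,\dots,n\}$, $n\ge0$, and whose arrows are order-preserving maps. A simplicial object is a functor $X\colon\Delta^{op}\to\mathcal M$, $X_n:=X([n])$. For $n\ge2$ and $1\le j\le n$, $i_j\colon[n]\to[1]$ is the arrow of $\Delta^{op}$ opposite to the map $[1]\to[n]$, $0\mapsto j-1$, $1\mapsto j$. Define $p_0\colon X_0\to(X_1)^0$ as the unique arrow, $p_1=1_{X_1}$, and for $n\ge2$, $p_n=\langle X(i_1),\dots,X(i_n)\rangle\colon X_n\to(X_1)^n$. Reduced bar construction based on a monoid $M$: the simplicial object $B$ with $B_n=M^n$, defined on an arrow $\varphi=f^{op}\colon[m]\to[n]$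 of $\Delta^{op}$ (with $f\colon[n]\to[m]$ order-preserving) as follows. Put $c(a)=\#\{i\in[n]: f(i)<a\}$ for $1\le a\le m$, and let $h(a)=c(a)$ if $1\le c(a)\le n$ and $h(a)$ undefined otherwise. Then $B(\varphi)\colon M^m\to M^n$ is the arrow whose $b$-th component ($1\le b\le n$) is the product, computed with $\mu$ in increasing order of $a$, of the projections $M^m\to M$ onto the coordinates $a$ with $h(a)=b$, and is $\eta\circ(\text{unique arrow }M^m\to M^0)$ if there is no such $a$. *)

theory Defs
  imports Main
begin

record ('o,'a) category =
  Obj :: "'o set"
  Arr :: "'a set"
  Dom :: "'a \<Rightarrow> 'o"
  Cod :: "'a \<Rightarrow> 'o"
  Id  :: "'o \<Rightarrow> 'a"
  Comp :: "'a \<Rightarrow> 'a \<Rightarrow> 'a"  (* Comp C g f = g o f *)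

definition hom :: "('o,'a) category \<Rightarrow> 'o \<Rightarrow> 'o \<Rightarrow> 'a set" where
  "hom C A B = {f \<in> Arr C. Dom C f = A \<and> Cod C f = B}"

definition is_category :: "('o,'a) category \<Rightarrow> bool" where
  "is_category C \<longleftrightarrow>
     (\<forall>A\<in>Obj C. Id C A \<in> hom C A A) \<and>
     (\<forall>f\<in>Arr C. Dom C f \<in> Obj C \<and> Cod C f \<in> Obj C) \<and>
     (\<forall>f\<in>Arr C. \<forall>g\<in>Arr C. Cod C f = Dom C g \<longrightarrow>
         Comp C g f \<in> hom C (Dom C f) (Cod C g)) \<and>
     (\<forall>f\<in>Arr C. Comp C f (Id C (Dom C f)) = f \<and> Comp C (Id C (Cod C f)) f = f) \<and>
     (\<forall>f\<in>Arr C. \<forall>g\<in>Arr C. \<forall>h\<in>Arr C. Cod C f = Dom C g \<longrightarrow> Cod C g = Dom C h \<longrightarrow>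
         Comp C h (Comp C g f) = Comp C (Comp C h g) f)"

record ('o,'a) products =
  Prod :: "'o \<Rightarrow> 'o \<Rightarrow> 'o"
  Term :: "'o"
  Pr1  :: "'o \<Rightarrow> 'o \<Rightarrow> 'a"
  Pr2  :: "'o \<Rightarrow> 'o \<Rightarrow> 'a"
  Pair :: "'a \<Rightarrow> 'a \<Rightarrow> 'a"
  Bang :: "'o \<Rightarrow> 'a"

definition has_chosen_products :: "('o,'a) category \<Rightarrow> ('o,'a) products \<Rightarrow> bool" where
  "has_chosen_products C P \<longleftrightarrow>
     Term P \<in> Obj C \<and>
     (\<forall>A\<in>Obj C. Bang P A \<in> hom C A (Term P) \<and> (\<forall>h\<in>hom C A (Term P). h = Bang P A)) \<and>
     (\<forall>A\<in>Obj C. \<forall>B\<in>Obj C.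
        Prod P A B \<in> Obj C \<and>
        Pr1 P A B \<in> hom C (Prod P A B) A \<and>
        Pr2 P A B \<in> hom C (Prod P A B) B \<and>
        (\<forall>D\<in>Obj C. \<forall>f\<in>hom C D A. \<forall>g\<in>hom C D B.
           Pair P f g \<in> hom C D (Prod P A B) \<and>
           Comp C (Pr1 P A B) (Pair P f g) = f \<and>
           Comp C (Pr2 P A B) (Pair P f g) = g \<and>
           (\<forall>h\<in>hom C D (Prod P A B).
              Comp C (Pr1 P A B) h = f \<longrightarrow> Comp C (Pr2 P A B) h = g \<longrightarrow> h = Pair P f g)))"

definition prod_arr :: "('o,'a) category \<Rightarrow> ('o,'a) products \<Rightarrow> 'a \<Rightarrow> 'a \<Rightarrow> 'a" where
  "prod_arr C P f g =
     Pair P (Comp C f (Pr1 P (Dom C f) (Dom C g))) (Comp C g (Pr2 P (Dom C f) (Dom C g)))"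

text \<open>The chosen products form a strict monoidal structure: strictly associative on
  objects and arrows, the terminal object is a strict unit, and the canonical
  associator and unitors are identities.\<close>
definition strict_cartesian :: "('o,'a) category \<Rightarrow> ('o,'a) products \<Rightarrow> bool" where
  "strict_cartesian C P \<longleftrightarrow>
     is_category C \<and> has_chosen_products C P \<and>
     (\<forall>A\<in>Obj C. \<forall>B\<in>Obj C. \<forall>D\<in>Obj C.
        Prod P (Prod P A B) D = Prod P A (Prod P B D) \<and>
        Pair P (Comp C (Pr1 P A B) (Pr1 P (Prod P A B) D))
               (Pair P (Comp C (Pr2 P A B) (Pr1 P (Prod P A B) D)) (Pr2 P (Prod P A B) D))
          = Id C (Prod P (Prod P A B) D)) \<and>
     (\<forall>f\<in>Arr C. \<forall>g\<in>Arr C. \<forall>h\<in>Arr C.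
        prod_arr C P (prod_arr C P f g) h = prod_arr C P f (prod_arr C P g h)) \<and>
     (\<forall>A\<in>Obj C. Prod P (Term P) A = A \<and> Prod P A (Term P) = A \<and>
        Pr2 P (Term P) A = Id C A \<and> Pr1 P A (Term P) = Id C A) \<and>
     (\<forall>f\<in>Arr C. prod_arr C P (Id C (Term P)) f = f \<and> prod_arr C P f (Id C (Term P)) = f)"

fun pow :: "('o,'a) products \<Rightarrow> 'o \<Rightarrow> nat \<Rightarrow> 'o" where
  "pow P A 0 = Term P"
| "pow P A (Suc 0) = A"
| "pow P A (Suc (Suc n)) = Prod P A (pow P A (Suc n))"

text \<open>Induced arrow <g1,...,gn> : D \<rightarrow> A1 \<times> ... \<times> An (D is the common domain,
  needed for n = 0, where the result is the unique arrow to the terminal object).\<close>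
fun tuple :: "('o,'a) products \<Rightarrow> 'o \<Rightarrow> 'a list \<Rightarrow> 'a" where
  "tuple P D [] = Bang P D"
| "tuple P D [g] = g"
| "tuple P D (g # h # gs) = Pair P g (tuple P D (h # gs))"

text \<open>Projection A^n \<rightarrow> A onto coordinate a (1 \<le> a \<le> n).\<close>
fun proj :: "('o,'a) category \<Rightarrow> ('o,'a) products \<Rightarrow> 'o \<Rightarrow> nat \<Rightarrow> nat \<Rightarrow> 'a" where
  "proj C P A 0 a = undefined"
| "proj C P A (Suc 0) a = Id C A"
| "proj C P A (Suc (Suc n)) a =
     (if a \<le> 1 then Pr1 P A (pow P A (Suc n))
      else Comp C (proj C P A (Suc n) (a - 1)) (Pr2 P A (pow P A (Suc n))))"

definition is_monoid :: "('o,'a) category \<Rightarrow> ('o,'a) products \<Rightarrow> 'o \<Rightarrow> 'a \<Rightarrow> 'a \<Rightarrow> bool" where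
  "is_monoid C P M mu eta \<longleftrightarrow>
     M \<in> Obj C \<and> mu \<in> hom C (Prod P M M) M \<and> eta \<in> hom C (pow P M 0) M \<and>
     Comp C mu (prod_arr C P mu (Id C M)) = Comp C mu (prod_arr C P (Id C M) mu) \<and>
     Comp C mu (prod_arr C P (Id C M) eta) = Id C M \<and>
     Comp C mu (prod_arr C P eta (Id C M)) = Id C M"

fun mprod :: "('o,'a) category \<Rightarrow> ('o,'a) products \<Rightarrow> 'a \<Rightarrow> 'a \<Rightarrow> 'o \<Rightarrow> 'a list \<Rightarrow> 'a" where
  "mprod C P mu eta D [] = Comp C eta (Bang P D)"
| "mprod C P mu eta D [f] = f"
| "mprod C P mu eta D (f # g # fs) = Comp C mu (Pair P f (mprod C P mu eta D (g # fs)))"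

text \<open>An order-preserving map f : [n] \<rightarrow> [m], represented by a function on nat
  (only its values on {0..n} matter).  The corresponding arrow of \<Delta>^op goes [m] \<rightarrow> [n].\<close>
definition delta_arr :: "nat \<Rightarrow> nat \<Rightarrow> (nat \<Rightarrow> nat) \<Rightarrow> bool" where
  "delta_arr n m f \<longleftrightarrow> (\<forall>i\<le>n. f i \<le> m) \<and> (\<forall>i j. i \<le> j \<longrightarrow> j \<le> n \<longrightarrow> f i \<le> f j)"

text \<open>Simplicial object: Xo n = X_n, and Xa n m f = X(f^op) : X_m \<rightarrow> X_n for f : [n] \<rightarrow> [m].\<close>
definition simplicial_object ::
  "('o,'a) category \<Rightarrow> (nat \<Rightarrow> 'o) \<Rightarrow> (nat \<Rightarrow> nat \<Rightarrow> (nat \<Rightarrow> nat) \<Rightarrow> 'a) \<Rightarrow> bool" where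
  "simplicial_object C Xo Xa \<longleftrightarrow>
     (\<forall>n. Xo n \<in> Obj C) \<and>
     (\<forall>n m f. delta_arr n m f \<longrightarrow> Xa n m f \<in> hom C (Xo m) (Xo n)) \<and>
     (\<forall>n m f g. delta_arr n m f \<longrightarrow> (\<forall>i\<le>n. f i = g i) \<longrightarrow> Xa n m f = Xa n m g) \<and>
     (\<forall>n. Xa n n id = Id C (Xo n)) \<and>
     (\<forall>n m k f g. delta_arr n m f \<longrightarrow> delta_arr m k g \<longrightarrow>
        Xa n k (g \<circ> f) = Comp C (Xa n m f) (Xa m k g))"

definition cnt :: "nat \<Rightarrow> (nat \<Rightarrow> nat) \<Rightarrow> nat \<Rightarrow> nat" where
  "cnt n f a = card {i. i \<le> n \<and> f i < a}"

definition bar_arr ::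
  "('o,'a) category \<Rightarrow> ('o,'a) products \<Rightarrow> 'o \<Rightarrow> 'a \<Rightarrow> 'a \<Rightarrow> nat \<Rightarrow> nat \<Rightarrow> (nat \<Rightarrow> nat) \<Rightarrow> 'a" where
  "bar_arr C P M mu eta n m f =
     tuple P (pow P M m)
       (map (\<lambda>b. mprod C P mu eta (pow P M m)
                    (map (\<lambda>a. proj C P M m a) (filter (\<lambda>a. cnt n f a = b) [1..<m+1])))
            [1..<n+1])"

definition is_reduced_bar ::
  "('o,'a) category \<Rightarrow> ('o,'a) products \<Rightarrow> (nat \<Rightarrow> 'o) \<Rightarrow> (nat \<Rightarrow> nat \<Rightarrow> (nat \<Rightarrow> nat) \<Rightarrow> 'a) \<Rightarrow> bool" where
  "is_reduced_bar C P Xo Xa \<longleftrightarrow>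
     (\<exists>M mu eta. is_monoid C P M mu eta \<and>
        (\<forall>n. Xo n = pow P M n) \<and>
        (\<forall>n m f. delta_arr n m f \<longrightarrow> Xa n m f = bar_arr C P M mu eta n m f))"

text \<open>i_j : [n] \<rightarrow> [1] in \<Delta>^op is opposite to 0 \<mapsto> j-1, 1 \<mapsto> j.\<close>
definition p_arr ::
  "('o,'a) category \<Rightarrow> ('o,'a) products \<Rightarrow> (nat \<Rightarrow> 'o) \<Rightarrow> (nat \<Rightarrow> nat \<Rightarrow> (nat \<Rightarrow> nat) \<Rightarrow> 'a) \<Rightarrow> nat \<Rightarrow> 'a" where
  "p_arr C P Xo Xa n =
     (if n = 0 then Bang P (Xo 0)
      else if n = 1 then Id C (Xo 1)
      else tuple P (Xo n) (map (\<lambda>j. Xa 1 n (\<lambda>i. if i = 0 then j - 1 else j)) [1..<n+1]))"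

end

theory Submission
  imports Defs
begin


lemma filter_upt_iv: "r \<le> m \<Longrightarrow> filter (\<lambda>a. l < a \<and> a \<le> r) [1..<m+1] = [Suc l..<Suc r]"
proof (induction m arbitrary: r)
  case 0 then show ?case by simp
next
  case (Suc m)
  show ?case
  proof (cases "r \<le> m")
    case True then show ?thesis using Suc by simp
  next
    case False
    then have r: "r = Suc m" using Suc by simp
    have "filter (\<lambda>a. l < a \<and> a \<le> r) [1..<m+1] = filter (\<lambda>a. l < a \<and> a \<le> m) [1..<m+1]"
      using r by (intro filter_cong) auto
    also have "\<dots> = [Suc l..<Suc m]" using Suc.IH by simp
    finally show ?thesis using r by auto
  qed
qed

lemma cnt_iff:
  assumes f: "delta_arr n m f" and b: "1 \<le> b" "b \<le> n"
  shows "cnt n f a = b \<longleftrightarrow> f (b - 1) < a \<and> a \<le> f b"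
proof
  have mono: "\<And>i j. i \<le> j \<Longrightarrow> j \<le> n \<Longrightarrow> f i \<le> f j" using f unfolding delta_arr_def by blast
  assume c: "cnt n f a = b"
  show "f (b - 1) < a \<and> a \<le> f b"
  proof (rule ccontr)
    assume "\<not> (f (b - 1) < a \<and> a \<le> f b)"
    then consider "a \<le> f (b - 1)" | "f b < a" by linarith
    then show False
    proof cases
      case 1
      have "{i. i \<le> n \<and> f i < a} \<subseteq> {..<b - 1}"
      proof
        fix i assume "i \<in> {i. i \<le> n \<and> f i < a}"
        then have "i \<le> n" "f i < a" by auto
        then show "i \<in> {..<b - 1}" using mono[of "b - 1" i] 1 by (cases "b - 1 \<le> i") auto
      qed
      then have "cnt n f a \<le> b - 1" unfolding cnt_def using card_mono[of "{..<b - 1}"] by fastforce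
      then show False using c b by simp
    next
      case 2
      have "{..b} \<subseteq> {i. i \<le> n \<and> f i < a}"
        using mono 2 b by (auto intro: le_less_trans)
      then have "card {..b} \<le> cnt n f a" unfolding cnt_def by (intro card_mono) auto
      then show False using c by simp
    qed
  qed
next
  have mono: "\<And>i j. i \<le> j \<Longrightarrow> j \<le> n \<Longrightarrow> f i \<le> f j" using f unfolding delta_arr_def by blast
  assume h: "f (b - 1) < a \<and> a \<le> f b"
  have "{i. i \<le> n \<and> f i < a} = {..<b}"
  proof (intro set_eqI iffI)
    fix i assume "i \<in> {i. i \<le> n \<and> f i < a}"
    then have "i \<le> n" "f i < a" by auto
    then show "i \<in> {..<b}" using mono[of b i] h by (cases "b \<le> i") auto
  next
    fix i assume "i \<in> {..<b}"
    then have "i \<le> b - 1" "b - 1 \<le> n" using b by auto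
    then show "i \<in> {i. i \<le> n \<and> f i < a}" using mono[of i "b - 1"] h b by auto
  qed
  then show "cnt n f a = b" unfolding cnt_def by simp
qed

lemma filter_cnt:
  assumes f: "delta_arr n m f" and b: "1 \<le> b" "b \<le> n"
  shows "filter (\<lambda>a. cnt n f a = b) [1..<m+1] = [Suc (f (b - 1))..<Suc (f b)]"
proof -
  have "filter (\<lambda>a. cnt n f a = b) [1..<m+1] = filter (\<lambda>a. f (b - 1) < a \<and> a \<le> f b) [1..<m+1]"
    using cnt_iff[OF f b] by (intro filter_cong) auto
  also have "\<dots> = [Suc (f (b - 1))..<Suc (f b)]"
    using f b unfolding delta_arr_def by (intro filter_upt_iv) auto
  finally show ?thesis .
qed


declare upt_Suc[simp del]


locale cc =
  fixes C :: "('o,'a) category" and P :: "('o,'a) products"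
  assumes cat: "is_category C" and prd: "has_chosen_products C P"
begin

lemma catc: "(\<forall>A\<in>Obj C. Id C A \<in> hom C A A)"
   "(\<forall>f\<in>Arr C. Dom C f \<in> Obj C \<and> Cod C f \<in> Obj C)"
   "(\<forall>f\<in>Arr C. \<forall>g\<in>Arr C. Cod C f = Dom C g \<longrightarrow>
         Comp C g f \<in> hom C (Dom C f) (Cod C g))"
   "(\<forall>f\<in>Arr C. Comp C f (Id C (Dom C f)) = f \<and> Comp C (Id C (Cod C f)) f = f)"
   "(\<forall>f\<in>Arr C. \<forall>g\<in>Arr C. \<forall>h\<in>Arr C. Cod C f = Dom C g \<longrightarrow> Cod C g = Dom C h \<longrightarrow>
         Comp C h (Comp C g f) = Comp C (Comp C h g) f)"
  using cat unfolding is_category_def by auto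

lemma id_hom: "A \<in> Obj C \<Longrightarrow> Id C A \<in> hom C A A"
  using catc(1) by blast
lemma hom_objs: "f \<in> hom C A B \<Longrightarrow> A \<in> Obj C \<and> B \<in> Obj C"
  using catc(2) unfolding hom_def by blast
lemma comp_hom: "f \<in> hom C A B \<Longrightarrow> g \<in> hom C B D \<Longrightarrow> Comp C g f \<in> hom C A D"
proof -
  assume f: "f \<in> hom C A B" and g: "g \<in> hom C B D"
  then have "f \<in> Arr C" "g \<in> Arr C" "Cod C f = Dom C g" "Dom C f = A" "Cod C g = D"
    unfolding hom_def by auto
  then show ?thesis using catc(3) by metis
qed
lemma comp_id_l: "f \<in> hom C A B \<Longrightarrow> Comp C (Id C B) f = f"
proof -
  assume f: "f \<in> hom C A B"
  then have "f \<in> Arr C" "Cod C f = B" unfolding hom_def by auto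
  then show ?thesis using catc(4) by metis
qed
lemma comp_id_r: "f \<in> hom C A B \<Longrightarrow> Comp C f (Id C A) = f"
proof -
  assume f: "f \<in> hom C A B"
  then have "f \<in> Arr C" "Dom C f = A" unfolding hom_def by auto
  then show ?thesis using catc(4) by metis
qed
lemma comp_assoc: "f \<in> hom C A B \<Longrightarrow> g \<in> hom C B D \<Longrightarrow> h \<in> hom C D E \<Longrightarrow>
   Comp C h (Comp C g f) = Comp C (Comp C h g) f"
proof -
  assume f: "f \<in> hom C A B" and g: "g \<in> hom C B D" and h: "h \<in> hom C D E"
  then have "f \<in> Arr C" "g \<in> Arr C" "h \<in> Arr C" "Cod C f = Dom C g" "Cod C g = Dom C h"
    unfolding hom_def by auto
  then show ?thesis using catc(5) by metis
qed

lemma term_obj: "Term P \<in> Obj C" using prd unfolding has_chosen_products_def by blast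
lemma bang_hom: "A \<in> Obj C \<Longrightarrow> Bang P A \<in> hom C A (Term P)"
  using prd unfolding has_chosen_products_def by blast
lemma bang_uniq: "h \<in> hom C A (Term P) \<Longrightarrow> h = Bang P A"
  using prd hom_objs unfolding has_chosen_products_def by blast
lemma prod_obj: "A \<in> Obj C \<Longrightarrow> B \<in> Obj C \<Longrightarrow> Prod P A B \<in> Obj C"
  using prd unfolding has_chosen_products_def by blast
lemma pr1_hom: "A \<in> Obj C \<Longrightarrow> B \<in> Obj C \<Longrightarrow> Pr1 P A B \<in> hom C (Prod P A B) A"
  using prd unfolding has_chosen_products_def by blast
lemma pr2_hom: "A \<in> Obj C \<Longrightarrow> B \<in> Obj C \<Longrightarrow> Pr2 P A B \<in> hom C (Prod P A B) B"
  using prd unfolding has_chosen_products_def by blast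
lemma pair_hom: "f \<in> hom C D A \<Longrightarrow> g \<in> hom C D B \<Longrightarrow> Pair P f g \<in> hom C D (Prod P A B)"
  using prd hom_objs unfolding has_chosen_products_def by blast
lemma pr1_pair: "f \<in> hom C D A \<Longrightarrow> g \<in> hom C D B \<Longrightarrow> Comp C (Pr1 P A B) (Pair P f g) = f"
  using prd hom_objs unfolding has_chosen_products_def by blast
lemma pr2_pair: "f \<in> hom C D A \<Longrightarrow> g \<in> hom C D B \<Longrightarrow> Comp C (Pr2 P A B) (Pair P f g) = g"
  using prd hom_objs unfolding has_chosen_products_def by blast
lemma pair_uniq: "h \<in> hom C D (Prod P A B) \<Longrightarrow> A \<in> Obj C \<Longrightarrow> B \<in> Obj C \<Longrightarrow>
   h = Pair P (Comp C (Pr1 P A B) h) (Comp C (Pr2 P A B) h)"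
proof -
  assume h: "h \<in> hom C D (Prod P A B)" and A: "A \<in> Obj C" and B: "B \<in> Obj C"
  have D: "D \<in> Obj C" using h hom_objs by blast
  have f: "Comp C (Pr1 P A B) h \<in> hom C D A" using comp_hom[OF h pr1_hom[OF A B]] .
  have g: "Comp C (Pr2 P A B) h \<in> hom C D B" using comp_hom[OF h pr2_hom[OF A B]] .
  show ?thesis using prd A B D f g h unfolding has_chosen_products_def by blast
qed

lemma pow_obj: "A \<in> Obj C \<Longrightarrow> pow P A n \<in> Obj C"
proof (induction n rule: less_induct)
  case (less n)
  then show ?case
  proof (cases n)
    case 0 then show ?thesis by (simp add: term_obj)
  next
    case (Suc k) then show ?thesis using less by (cases k) (auto simp: prod_obj)
  qed
qed

lemma proj_hom: "A \<in> Obj C \<Longrightarrow> 1 \<le> j \<Longrightarrow> j \<le> n \<Longrightarrow> proj C P A n j \<in> hom C (pow P A n) A"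
proof (induction n arbitrary: j rule: nat_less_induct)
  case (1 n)
  then show ?case
  proof (cases n)
    case 0 then show ?thesis using 1 by simp
  next
    case (Suc k) note k = this
    show ?thesis
    proof (cases k)
      case 0 then show ?thesis using 1 k by (simp add: id_hom)
    next
      case (Suc l)
      show ?thesis
      proof (cases "j \<le> 1")
        case True then show ?thesis using 1 k Suc by (simp add: pr1_hom pow_obj)
      next
        case False
        have pj: "proj C P A (Suc l) (j - 1) \<in> hom C (pow P A (Suc l)) A"
          using 1 k Suc False by auto
        have "Comp C (proj C P A (Suc l) (j - 1)) (Pr2 P A (pow P A (Suc l))) \<in> hom C (Prod P A (pow P A (Suc l))) A"
          by (rule comp_hom[OF pr2_hom[OF 1(2) pow_obj[OF 1(2)]] pj])
        then show ?thesis using k Suc False by simp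
      qed
    qed
  qed
qed

lemma tuple_hom: "gs \<noteq> [] \<Longrightarrow> \<forall>g\<in>set gs. g \<in> hom C D A \<Longrightarrow> tuple P D gs \<in> hom C D (pow P A (length gs))"
proof (induction gs rule: induct_list012)
  case (3 x y zs)
  then show ?case by (auto intro!: pair_hom)
qed auto

lemma proj_tuple: "\<forall>g\<in>set gs. g \<in> hom C D A \<Longrightarrow> A \<in> Obj C \<Longrightarrow> 1 \<le> j \<Longrightarrow> j \<le> length gs \<Longrightarrow>
   Comp C (proj C P A (length gs) j) (tuple P D gs) = gs ! (j - 1)"
proof (induction gs arbitrary: j rule: induct_list012)
  case 1 then show ?case by simp
next
  case (2 x) then show ?case by (simp add: comp_id_l)
next
  case (3 x y zs)
  have th: "tuple P D (y # zs) \<in> hom C D (pow P A (Suc (length zs)))"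
    using tuple_hom[of "y#zs" D A] 3(3) by simp
  have x: "x \<in> hom C D A" using 3(3) by simp
  show ?case
  proof (cases "j \<le> 1")
    case True
    then have "j = 1" using 3 by simp
    then show ?thesis using pr1_pair[OF x th] by simp
  next
    case False
    have pj: "proj C P A (Suc (length zs)) (j - 1) \<in> hom C (pow P A (Suc (length zs))) A"
      using proj_hom[OF 3(4)] False 3(6) by simp
    have "Comp C (proj C P A (length (x # y # zs)) j) (tuple P D (x # y # zs))
       = Comp C (Comp C (proj C P A (Suc (length zs)) (j - 1)) (Pr2 P A (pow P A (Suc (length zs)))))
            (Pair P x (tuple P D (y # zs)))" using False by simp
    also have "\<dots> = Comp C (proj C P A (Suc (length zs)) (j - 1)) (Comp C (Pr2 P A (pow P A (Suc (length zs)))) (Pair P x (tuple P D (y # zs))))"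
      using comp_assoc[OF pair_hom[OF x th] pr2_hom[OF 3(4) pow_obj[OF 3(4)]] pj] by simp
    also have "\<dots> = Comp C (proj C P A (length (y#zs)) (j - 1)) (tuple P D (y # zs))"
      using pr2_pair[OF x th] by simp
    also have "\<dots> = (y#zs) ! (j - 1 - 1)"
      using 3(2)[of "j - 1"] 3(3,4,6) False by simp
    finally show ?thesis using False by (cases j) auto
  qed
qed

lemma tuple_ext: "\<forall>g\<in>set gs. g \<in> hom C D A \<Longrightarrow> gs \<noteq> [] \<Longrightarrow> A \<in> Obj C \<Longrightarrow>
   k \<in> hom C D (pow P A (length gs)) \<Longrightarrow>
   (\<forall>j. 1 \<le> j \<and> j \<le> length gs \<longrightarrow> Comp C (proj C P A (length gs) j) k = gs ! (j - 1)) \<Longrightarrow>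
   k = tuple P D gs"
proof (induction gs arbitrary: k rule: induct_list012)
  case 1 then show ?case by simp
next
  case (2 x) then show ?case using comp_id_l[of k D A] by auto
next
  case (3 x y zs)
  let ?Q = "pow P A (Suc (length zs))"
  have A: "A \<in> Obj C" by fact
  have k: "k \<in> hom C D (Prod P A ?Q)" using 3(6) by simp
  have p2k: "Comp C (Pr2 P A ?Q) k \<in> hom C D ?Q"
    using comp_hom[OF k pr2_hom[OF A pow_obj[OF A]]] .
  have "Comp C (Pr2 P A ?Q) k = tuple P D (y # zs)"
  proof (rule 3(2))
    show "\<forall>g\<in>set (y # zs). g \<in> hom C D A" using 3(3) by simp
    show "Comp C (Pr2 P A ?Q) k \<in> hom C D (pow P A (length (y # zs)))" using p2k by simp
    show "\<forall>j. 1 \<le> j \<and> j \<le> length (y # zs) \<longrightarrow>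
        Comp C (proj C P A (length (y # zs)) j) (Comp C (Pr2 P A ?Q) k) = (y # zs) ! (j - 1)"
    proof (intro allI impI)
      fix j assume j: "1 \<le> j \<and> j \<le> length (y # zs)"
      have pj: "proj C P A (Suc (length zs)) j \<in> hom C ?Q A" using proj_hom[OF A] j by simp
      have "Comp C (proj C P A (length (y # zs)) j) (Comp C (Pr2 P A ?Q) k)
          = Comp C (Comp C (proj C P A (Suc (length zs)) j) (Pr2 P A ?Q)) k"
        using comp_assoc[OF k pr2_hom[OF A pow_obj[OF A]] pj] by simp
      also have "\<dots> = Comp C (proj C P A (length (x # y # zs)) (Suc j)) k" using j by simp
      also have "\<dots> = (x # y # zs) ! (Suc j - 1)" using 3(7) j by auto
      finally show "Comp C (proj C P A (length (y # zs)) j) (Comp C (Pr2 P A ?Q) k) = (y # zs) ! (j - 1)"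
        using j by (cases j) auto
    qed
  qed (simp_all add: A)
  moreover have "Comp C (Pr1 P A ?Q) k = x" using 3(7) by auto
  ultimately show ?case using pair_uniq[OF k A pow_obj[OF A]] by simp
qed

lemma tuple_projs: "A \<in> Obj C \<Longrightarrow> 1 \<le> n \<Longrightarrow>
   tuple P (pow P A n) (map (proj C P A n) [1..<n+1]) = Id C (pow P A n)"
proof -
  assume A: "A \<in> Obj C" and n: "1 \<le> n"
  show ?thesis
  proof (rule sym, rule tuple_ext)
    show "\<forall>g\<in>set (map (proj C P A n) [1..<n + 1]). g \<in> hom C (pow P A n) A"
      using proj_hom[OF A] by auto
    show "map (proj C P A n) [1..<n + 1] \<noteq> []" using n by simp
    show "Id C (pow P A n) \<in> hom C (pow P A n) (pow P A (length (map (proj C P A n) [1..<n + 1])))"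
      using id_hom[OF pow_obj[OF A], of n] by simp
    show "\<forall>j. 1 \<le> j \<and> j \<le> length (map (proj C P A n) [1..<n + 1]) \<longrightarrow>
        Comp C (proj C P A (length (map (proj C P A n) [1..<n + 1])) j) (Id C (pow P A n)) =
        map (proj C P A n) [1..<n + 1] ! (j - 1)"
      using comp_id_r[OF proj_hom[OF A]] by auto
  qed (use A in simp_all)
qed

lemma delta_ij: "1 \<le> j \<Longrightarrow> j \<le> n \<Longrightarrow> delta_arr 1 n (\<lambda>i. if i = 0 then j - 1 else j)"
  unfolding delta_arr_def by auto

lemma bar_ij: "1 \<le> j \<Longrightarrow> j \<le> n \<Longrightarrow>
   bar_arr C P M mu eta 1 n (\<lambda>i. if i = 0 then j - 1 else j) = proj C P M n j"
proof -
  assume j: "1 \<le> j" "j \<le> n"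
  have "filter (\<lambda>a. cnt 1 (\<lambda>i. if i = 0 then j - 1 else j) a = 1) [1..<n+1] = [Suc (j - 1)..<Suc j]"
    using filter_cnt[OF delta_ij[OF j], of 1] by simp
  also have "\<dots> = [j]" using j by (simp add: upt_rec)
  moreover have "[1..<1+1] = [1::nat]" by (simp add: upt_rec)
  ultimately show ?thesis unfolding bar_arr_def by simp
qed

lemma fwd:
  assumes mon: "is_monoid C P M mu eta" and o: "\<forall>n. Xo n = pow P M n"
    and a: "\<forall>n m f. delta_arr n m f \<longrightarrow> Xa n m f = bar_arr C P M mu eta n m f"
  shows "Xo n = pow P (Xo 1) n \<and> p_arr C P Xo Xa n = Id C (Xo n)"
proof -
  have M: "M \<in> Obj C" using mon unfolding is_monoid_def by blast
  have 1: "Xo n = pow P (Xo 1) n" using o by simp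
  have "p_arr C P Xo Xa n = Id C (Xo n)"
  proof (cases "n \<le> 1")
    case True
    then consider "n = 0" | "n = 1" by linarith
    then show ?thesis
    proof cases
      case 1
      then show ?thesis using o bang_uniq[OF id_hom[OF term_obj]] unfolding p_arr_def by simp
    next
      case 2 then show ?thesis unfolding p_arr_def by simp
    qed
  next
    case False
    have eq: "map (\<lambda>j. Xa 1 n (\<lambda>i. if i = 0 then j - 1 else j)) [1..<n+1] = map (proj C P M n) [1..<n+1]"
    proof (rule map_cong)
      fix j assume "j \<in> set [1..<n+1]"
      then have j: "1 \<le> j" "j \<le> n" by auto
      show "Xa 1 n (\<lambda>i. if i = 0 then j - 1 else j) = proj C P M n j"
        using a delta_ij[OF j] bar_ij[OF j] by simp
    qed simp
    have "p_arr C P Xo Xa n = tuple P (Xo n) (map (\<lambda>j. Xa 1 n (\<lambda>i. if i = 0 then j - 1 else j)) [1..<n+1])"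
      using False unfolding p_arr_def by simp
    also have "\<dots> = tuple P (pow P M n) (map (proj C P M n) [1..<n+1])" unfolding eq using o by simp
    also have "\<dots> = Id C (Xo n)" using tuple_projs[OF M, of n] False o by simp
    finally show ?thesis .
  qed
  then show ?thesis using 1 by simp
qed

end


definition ij :: "nat \<Rightarrow> nat \<Rightarrow> nat" where "ij j = (\<lambda>i. if i = 0 then j - 1 else j)"
definition d1 :: "nat \<Rightarrow> nat" where "d1 = (\<lambda>i. if i = 0 then 0 else 2)"

lemma delta_comp: "delta_arr n m f \<Longrightarrow> delta_arr m k g \<Longrightarrow> delta_arr n k (g \<circ> f)"
  unfolding delta_arr_def by auto

locale bw = cc C P for C :: "('o,'a) category" and P :: "('o,'a) products" +
  fixes Xo :: "nat \<Rightarrow> 'o" and Xa :: "nat \<Rightarrow> nat \<Rightarrow> (nat \<Rightarrow> nat) \<Rightarrow> 'a"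
  assumes so: "simplicial_object C Xo Xa"
    and st: "strict_cartesian C P"
    and hp: "\<forall>n. Xo n = pow P (Xo 1) n \<and> p_arr C P Xo Xa n = Id C (Xo n)"
begin

abbreviation "M \<equiv> Xo 1"
abbreviation "mu \<equiv> Xa 1 2 d1"
abbreviation "eta \<equiv> Xa 1 0 (\<lambda>i. 0)"

lemma Xo_obj: "Xo n \<in> Obj C" using so unfolding simplicial_object_def by blast
lemma M_obj: "M \<in> Obj C" by (rule Xo_obj)
lemma Xo_pow: "Xo n = pow P M n" using hp by blast
lemma Xa_hom: "delta_arr n m f \<Longrightarrow> Xa n m f \<in> hom C (pow P M m) (pow P M n)"
  using so Xo_pow unfolding simplicial_object_def by metis
lemma Xa_cong: "delta_arr n m f \<Longrightarrow> (\<forall>i\<le>n. f i = g i) \<Longrightarrow> Xa n m f = Xa n m g"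
  using so unfolding simplicial_object_def by blast
lemma Xa_id: "Xa n n id = Id C (pow P M n)"
  using so Xo_pow unfolding simplicial_object_def by metis
lemma Xa_comp: "delta_arr n m f \<Longrightarrow> delta_arr m k g \<Longrightarrow> Xa n k (g \<circ> f) = Comp C (Xa n m f) (Xa m k g)"
  using so unfolding simplicial_object_def by blast

lemma pow1: "pow P A 1 = A" by simp
lemma upt12: "[1..<1+1] = [1::nat]" by (simp add: upt_rec)
lemma nth_upt1: "1 \<le> j \<Longrightarrow> j \<le> n \<Longrightarrow> [1..<n+1] ! (j - 1) = j"
  by (subst nth_upt) auto
lemma Xa_hom1: "delta_arr 1 m f \<Longrightarrow> Xa 1 m f \<in> hom C (pow P M m) M"
  using Xa_hom[of 1 m f] by (simp only: pow1)

lemma delta_ij': "1 \<le> j \<Longrightarrow> j \<le> n \<Longrightarrow> delta_arr 1 n (ij j)"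
  unfolding ij_def using delta_ij by simp

lemma proj_eq: "1 \<le> j \<Longrightarrow> j \<le> n \<Longrightarrow> Xa 1 n (ij j) = proj C P M n j"
proof -
  assume j: "1 \<le> j" "j \<le> n"
  show ?thesis
  proof (cases "n = 1")
    case True
    then have "j = 1" using j by simp
    have "Xa 1 1 (ij 1) = Xa 1 1 id" by (rule Xa_cong[OF delta_ij'[of 1 1]]) (auto simp: ij_def)
    then show ?thesis using True \<open>j = 1\<close> Xa_id by simp
  next
    case False
    let ?hs = "map (\<lambda>j. Xa 1 n (ij j)) [1..<n+1]"
    have pn: "tuple P (Xo n) ?hs = Id C (Xo n)"
    proof -
      have "p_arr C P Xo Xa n = Id C (Xo n)" using hp by blast
      moreover have "p_arr C P Xo Xa n = tuple P (Xo n) ?hs"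
        using False j unfolding p_arr_def ij_def by simp
      ultimately show ?thesis by simp
    qed
    have hs: "\<forall>g\<in>set ?hs. g \<in> hom C (pow P M n) M"
      using Xa_hom1[OF delta_ij'] by auto
    have "proj C P M n j = Comp C (proj C P M n j) (Id C (pow P M n))"
      using comp_id_r[OF proj_hom[OF M_obj j]] by simp
    also have "\<dots> = Comp C (proj C P M (length ?hs) j) (tuple P (Xo n) ?hs)"
      using pn Xo_pow[of n] by simp
    also have "\<dots> = ?hs ! (j - 1)"
      using proj_tuple[OF hs M_obj, of j] j Xo_pow[of n] nth_upt1[OF j] by simp
    also have "\<dots> = Xa 1 n (ij j)" using j nth_upt1[OF j] by simp
    finally show ?thesis by simp
  qed
qed

lemma decomp: "1 \<le> n \<Longrightarrow> delta_arr n m f \<Longrightarrow>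
  Xa n m f = tuple P (pow P M m) (map (\<lambda>j. Xa 1 m (f \<circ> ij j)) [1..<n+1])"
proof -
  assume n: "1 \<le> n" and f: "delta_arr n m f"
  show ?thesis
  proof (cases "n = 1")
    case True
    have "Xa 1 m f = Xa 1 m (f \<circ> ij 1)"
      by (rule Xa_cong[OF f[unfolded True]]) (auto simp: ij_def le_Suc_eq)
    then show ?thesis using True upt12 by simp
  next
    case False
    let ?gs = "map (\<lambda>j. Xa 1 m (f \<circ> ij j)) [1..<n+1]"
    show ?thesis
    proof (rule tuple_ext)
      show "\<forall>g\<in>set ?gs. g \<in> hom C (pow P M m) M"
        using Xa_hom1[OF delta_comp[OF delta_ij' f]] by auto
      show "?gs \<noteq> []" using n by simp
      show "Xa n m f \<in> hom C (pow P M m) (pow P M (length ?gs))" using Xa_hom[OF f] by simp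
      show "\<forall>j. 1 \<le> j \<and> j \<le> length ?gs \<longrightarrow> Comp C (proj C P M (length ?gs) j) (Xa n m f) = ?gs ! (j - 1)"
      proof (intro allI impI)
        fix j assume j: "1 \<le> j \<and> j \<le> length ?gs"
        then have j': "1 \<le> j" "j \<le> n" by auto
        have "Comp C (proj C P M (length ?gs) j) (Xa n m f) = Comp C (Xa 1 n (ij j)) (Xa n m f)"
          using proj_eq[OF j'] by simp
        also have "\<dots> = Xa 1 m (f \<circ> ij j)" using Xa_comp[OF delta_ij'[OF j'] f] by simp
        also have "\<dots> = ?gs ! (j - 1)" using j' nth_upt1[OF j'] by simp
        finally show "Comp C (proj C P M (length ?gs) j) (Xa n m f) = ?gs ! (j - 1)" .
      qed
    qed (rule M_obj)
  qed
qed

lemma G: "delta_arr 1 m g \<Longrightarrow>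
  Xa 1 m g = mprod C P mu eta (pow P M m) (map (proj C P M m) [Suc (g 0)..<Suc (g 1)])"
proof (induction "g 1 - g 0" arbitrary: g rule: less_induct)
  case less
  have dg: "delta_arr 1 m g" by fact
  have g01: "g 0 \<le> g 1" "g 1 \<le> m" using dg unfolding delta_arr_def by auto
  consider "g 1 = g 0" | "g 1 = Suc (g 0)" | "Suc (Suc (g 0)) \<le> g 1" using g01 by linarith
  then show ?case
  proof cases
    case 1
    define u where "u = g 0"
    have c0: "delta_arr 1 0 (\<lambda>i. 0)" unfolding delta_arr_def by auto
    have cu: "delta_arr 0 m (\<lambda>i. u)" using g01 unfolding delta_arr_def u_def by auto
    have "Xa 1 m g = Xa 1 m ((\<lambda>i::nat. u) \<circ> (\<lambda>i::nat. 0::nat))"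
      by (rule Xa_cong[OF dg]) (use 1 in \<open>auto simp: u_def le_Suc_eq\<close>)
    also have "\<dots> = Comp C eta (Xa 0 m (\<lambda>i. u))" using Xa_comp[OF c0 cu] by simp
    finally have e: "Xa 1 m g = Comp C eta (Xa 0 m (\<lambda>i. u))" .
    have "Xa 0 m (\<lambda>i. u) = Bang P (pow P M m)"
      using Xa_hom[OF cu] by (intro bang_uniq) simp
    then show ?thesis using 1 e unfolding u_def by simp
  next
    case 2
    have j: "1 \<le> g 1" "g 1 \<le> m" using 2 g01 by auto
    have "Xa 1 m g = Xa 1 m (ij (g 1))"
      by (rule Xa_cong[OF dg]) (use 2 in \<open>auto simp: ij_def le_Suc_eq\<close>)
    also have "\<dots> = proj C P M m (g 1)" by (rule proj_eq[OF j])
    finally show ?thesis using 2 by (simp add: upt_rec)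
  next
    case 3
    define u where "u = g 0"
    define v where "v = g 1"
    define g' where "g' = (\<lambda>i::nat. if i = 0 then u else if i = 1 then Suc u else v)"
    have uv: "Suc (Suc u) \<le> v" "v \<le> m" using 3 g01 unfolding u_def v_def by auto
    have dg': "delta_arr 2 m g'" using uv unfolding delta_arr_def g'_def by auto
    have dd1: "delta_arr 1 2 d1" unfolding delta_arr_def d1_def by auto
    have "Xa 1 m g = Xa 1 m (g' \<circ> d1)"
      by (rule Xa_cong[OF dg]) (auto simp: g'_def d1_def u_def v_def le_Suc_eq)
    also have "\<dots> = Comp C mu (Xa 2 m g')" using Xa_comp[OF dd1 dg'] by simp
    also have "Xa 2 m g' = tuple P (pow P M m) (map (\<lambda>j. Xa 1 m (g' \<circ> ij j)) [1..<2+1])"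
      by (rule decomp[OF _ dg']) simp
    also have "[1..<2+1] = [1, 2::nat]" by (simp add: upt_rec)
    finally have e1: "Xa 1 m g = Comp C mu (Pair P (Xa 1 m (g' \<circ> ij 1)) (Xa 1 m (g' \<circ> ij 2)))"
      by (simp add: o_def)
    have da: "delta_arr 1 m (g' \<circ> ij 1)" by (rule delta_comp[OF delta_ij' dg']) auto
    have db: "delta_arr 1 m (g' \<circ> ij 2)" by (rule delta_comp[OF delta_ij' dg']) auto
    have va: "(g' \<circ> ij 1) 0 = u" "(g' \<circ> ij 1) 1 = Suc u" unfolding g'_def ij_def by auto
    have vb: "(g' \<circ> ij 2) 0 = Suc u" "(g' \<circ> ij 2) 1 = v" unfolding g'_def ij_def by auto
    have "Xa 1 m (g' \<circ> ij 1) = mprod C P mu eta (pow P M m) (map (proj C P M m) [Suc u..<Suc (Suc u)])"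
      using less(1)[OF _ da] va uv unfolding u_def v_def by simp
    also have "\<dots> = proj C P M m (Suc u)" by (simp add: upt_rec)
    finally have ea: "Xa 1 m (g' \<circ> ij 1) = proj C P M m (Suc u)" .
    have eb: "Xa 1 m (g' \<circ> ij 2) = mprod C P mu eta (pow P M m) (map (proj C P M m) [Suc (Suc u)..<Suc v])"
      using less(1)[OF _ db] vb uv unfolding u_def v_def by simp
    have l: "[Suc u..<Suc v] = Suc u # Suc (Suc u) # [Suc (Suc (Suc u))..<Suc v]"
      using uv by (simp add: upt_rec)
    have l2: "[Suc (Suc u)..<Suc v] = Suc (Suc u) # [Suc (Suc (Suc u))..<Suc v]"
      using uv by (simp add: upt_rec)
    show ?thesis unfolding e1 ea eb u_def[symmetric] v_def[symmetric] l l2 by simp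
  qed
qed

lemma Xa_bar: "delta_arr n m f \<Longrightarrow> Xa n m f = bar_arr C P M mu eta n m f"
proof (cases "n = 0")
  case True
  assume f: "delta_arr n m f"
  have "Xa n m f = Bang P (pow P M m)" using Xa_hom[OF f] True by (intro bang_uniq) simp
  then show ?thesis using True unfolding bar_arr_def by simp
next
  case False
  assume f: "delta_arr n m f"
  have "Xa n m f = tuple P (pow P M m) (map (\<lambda>j. Xa 1 m (f \<circ> ij j)) [1..<n+1])"
    using decomp[OF _ f] False by simp
  also have "map (\<lambda>j. Xa 1 m (f \<circ> ij j)) [1..<n+1] = map (\<lambda>b. mprod C P mu eta (pow P M m)
                    (map (\<lambda>a. proj C P M m a) (filter (\<lambda>a. cnt n f a = b) [1..<m+1]))) [1..<n+1]"
  proof (rule map_cong)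
    fix b assume "b \<in> set [1..<n+1]"
    then have b: "1 \<le> b" "b \<le> n" by auto
    have "Xa 1 m (f \<circ> ij b) = mprod C P mu eta (pow P M m) (map (proj C P M m) [Suc ((f \<circ> ij b) 0)..<Suc ((f \<circ> ij b) 1)])"
      by (rule G[OF delta_comp[OF delta_ij'[OF b] f]])
    also have "[Suc ((f \<circ> ij b) 0)..<Suc ((f \<circ> ij b) 1)] = filter (\<lambda>a. cnt n f a = b) [1..<m+1]"
      using filter_cnt[OF f b] by (simp add: ij_def)
    finally show "Xa 1 m (f \<circ> ij b) = mprod C P mu eta (pow P M m)
                    (map (\<lambda>a. proj C P M m a) (filter (\<lambda>a. cnt n f a = b) [1..<m+1]))" by (simp add: o_def)
  qed simp
  finally show ?thesis unfolding bar_arr_def .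
qed

lemma pow2: "pow P A 2 = Prod P A A" by (simp add: numeral_2_eq_2)
lemma pow3: "pow P A 3 = Prod P A (Prod P A A)" by (simp add: numeral_3_eq_3)

lemma Xa2: "delta_arr 2 m f \<Longrightarrow> Xa 2 m f = Pair P (Xa 1 m (f \<circ> ij 1)) (Xa 1 m (f \<circ> ij 2))"
proof -
  assume f: "delta_arr 2 m f"
  have "Xa 2 m f = tuple P (pow P M m) (map (\<lambda>j. Xa 1 m (f \<circ> ij j)) [1..<2+1])"
    by (rule decomp[OF _ f]) simp
  also have "[1..<2+1] = [1, 2::nat]" by (simp add: upt_rec)
  finally show ?thesis by (simp add: o_def)
qed

lemma stc: "\<forall>A\<in>Obj C. \<forall>B\<in>Obj C. \<forall>D\<in>Obj C.
        Prod P (Prod P A B) D = Prod P A (Prod P B D) \<and>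
        Pair P (Comp C (Pr1 P A B) (Pr1 P (Prod P A B) D))
               (Pair P (Comp C (Pr2 P A B) (Pr1 P (Prod P A B) D)) (Pr2 P (Prod P A B) D))
          = Id C (Prod P (Prod P A B) D)"
  "\<forall>A\<in>Obj C. Prod P (Term P) A = A \<and> Prod P A (Term P) = A \<and>
        Pr2 P (Term P) A = Id C A \<and> Pr1 P A (Term P) = Id C A"
  using st unfolding strict_cartesian_def by auto

lemma G1: "delta_arr 1 m h \<Longrightarrow> h 0 = x \<Longrightarrow> h 1 = y \<Longrightarrow>
  Xa 1 m h = mprod C P mu eta (pow P M m) (map (proj C P M m) [Suc x..<Suc y])"
  using G by simp

lemma monoid: "is_monoid C P M mu eta"
proof -
  have Mo: "M \<in> Obj C" by (rule M_obj)
  define E where "E = Prod P M M"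
  define M3 where "M3 = Prod P M E"
  have Eo: "E \<in> Obj C" unfolding E_def using prod_obj[OF Mo Mo] .
  have M3o: "M3 \<in> Obj C" unfolding M3_def using prod_obj[OF Mo Eo] .
  have E3: "Prod P E M = M3" using stc(1) Mo unfolding E_def M3_def by blast
  have alpha: "Pair P (Comp C (Pr1 P M M) (Pr1 P E M)) (Pair P (Comp C (Pr2 P M M) (Pr1 P E M)) (Pr2 P E M))
     = Id C M3" using stc(1) Mo E3 unfolding E_def M3_def by metis
  have dd1: "delta_arr 1 2 d1" unfolding delta_arr_def d1_def by auto
  have mu_hom: "mu \<in> hom C E M" using Xa_hom1[OF dd1] unfolding E_def by (simp add: pow2)
  have c0: "delta_arr 1 0 (\<lambda>i. 0)" unfolding delta_arr_def by auto
  have eta_hom: "eta \<in> hom C (Term P) M" using Xa_hom1[OF c0] by simp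
  have pr1E: "Pr1 P E M \<in> hom C M3 E" using pr1_hom[OF Eo Mo] E3 by simp
  have pr2E: "Pr2 P E M \<in> hom C M3 M" using pr2_hom[OF Eo Mo] E3 by simp
  have p1MM: "Pr1 P M M \<in> hom C E M" using pr1_hom[OF Mo Mo] unfolding E_def .
  have p2MM: "Pr2 P M M \<in> hom C E M" using pr2_hom[OF Mo Mo] unfolding E_def .
  have p1ME: "Pr1 P M E \<in> hom C M3 M" using pr1_hom[OF Mo Eo] unfolding M3_def .
  have p2ME: "Pr2 P M E \<in> hom C M3 E" using pr2_hom[OF Mo Eo] unfolding M3_def .
  define a where "a = Comp C (Pr1 P M M) (Pr1 P E M)"
  define b where "b = Comp C (Pr2 P M M) (Pr1 P E M)"
  define c where "c = Pr2 P E M"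
  have ah: "a \<in> hom C M3 M" unfolding a_def using comp_hom[OF pr1E p1MM] .
  have bh: "b \<in> hom C M3 M" unfolding b_def using comp_hom[OF pr1E p2MM] .
  have ch: "c \<in> hom C M3 M" unfolding c_def using pr2E .
  have bch: "Pair P b c \<in> hom C M3 E" unfolding E_def using pair_hom[OF bh ch] .
  have alpha': "Pair P a (Pair P b c) = Id C M3" using alpha unfolding a_def b_def c_def .
  have e1: "Pr1 P M E = a"
  proof -
    have "Pr1 P M E = Comp C (Pr1 P M E) (Id C M3)" using comp_id_r[OF p1ME] by simp
    also have "\<dots> = a" unfolding alpha'[symmetric] using pr1_pair[OF ah bch] .
    finally show ?thesis .
  qed
  have e2: "Pr2 P M E = Pair P b c"
  proof -
    have "Pr2 P M E = Comp C (Pr2 P M E) (Id C M3)" using comp_id_r[OF p2ME] by simp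
    also have "\<dots> = Pair P b c" unfolding alpha'[symmetric] using pr2_pair[OF ah bch] .
    finally show ?thesis .
  qed
  have e3: "Comp C (Pr1 P M M) (Pr2 P M E) = b" unfolding e2 E_def[symmetric] using pr1_pair[OF bh ch] E_def by simp
  have e4: "Comp C (Pr2 P M M) (Pr2 P M E) = c" unfolding e2 using pr2_pair[OF bh ch] by simp
  have p31: "proj C P M 3 1 = Pr1 P M E" unfolding E_def by (simp add: numeral_3_eq_3)
  have p32: "proj C P M 3 2 = b"
    using e3 unfolding E_def by (simp add: numeral_3_eq_3 numeral_2_eq_2)
  have p33: "proj C P M 3 3 = c"
  proof -
    have "proj C P M 3 3 = Comp C (Comp C (Id C M) (Pr2 P M M)) (Pr2 P M E)"
      unfolding E_def by (simp add: numeral_3_eq_3)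
    also have "\<dots> = c" using comp_id_l[OF p2MM] e4 by simp
    finally show ?thesis .
  qed
  have P1E: "Pr1 P E M = Pair P (Pr1 P M E) b"
  proof -
    have "Pr1 P E M = Pair P (Comp C (Pr1 P M M) (Pr1 P E M)) (Comp C (Pr2 P M M) (Pr1 P E M))"
      using pair_uniq[OF pr1E[unfolded E_def] Mo Mo] unfolding E_def by simp
    then show ?thesis using e1 unfolding a_def b_def by simp
  qed
  have domId: "Dom C (Id C M) = M" using id_hom[OF Mo] unfolding hom_def by simp
  have domMu: "Dom C mu = E" using mu_hom unfolding hom_def by simp
  have domEta: "Dom C eta = Term P" using eta_hom unfolding hom_def by simp
  define h03 where "h03 = (\<lambda>i::nat. if i = 0 then 0 else (3::nat))"
  define f1 where "f1 = (\<lambda>i::nat. if i = 0 then 0 else if i = 1 then 2 else (3::nat))"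
  define f2 where "f2 = (\<lambda>i::nat. if i = 0 then 0 else if i = 1 then 1 else (3::nat))"
  have df1: "delta_arr 2 3 f1" unfolding delta_arr_def f1_def by auto
  have df2: "delta_arr 2 3 f2" unfolding delta_arr_def f2_def by auto
  have X1: "Xa 2 3 f1 = Pair P (Comp C mu (Pair P (proj C P M 3 1) (proj C P M 3 2))) (proj C P M 3 3)"
  proof -
    have "Xa 1 3 (f1 \<circ> ij 1) = mprod C P mu eta (pow P M 3) (map (proj C P M 3) [Suc 0..<Suc 2])"
      by (rule G1[OF delta_comp[OF delta_ij' df1]]) (auto simp: f1_def ij_def)
    moreover have "Xa 1 3 (f1 \<circ> ij 2) = mprod C P mu eta (pow P M 3) (map (proj C P M 3) [Suc 2..<Suc 3])"
      by (rule G1[OF delta_comp[OF delta_ij' df1]]) (auto simp: f1_def ij_def)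
    moreover have "[Suc 0..<Suc 2] = [1,2::nat]" "[Suc 2..<Suc 3] = [3::nat]" by (simp_all add: upt_rec)
    ultimately show ?thesis using Xa2[OF df1] by simp
  qed
  have X2: "Xa 2 3 f2 = Pair P (proj C P M 3 1) (Comp C mu (Pair P (proj C P M 3 2) (proj C P M 3 3)))"
  proof -
    have "Xa 1 3 (f2 \<circ> ij 1) = mprod C P mu eta (pow P M 3) (map (proj C P M 3) [Suc 0..<Suc 1])"
      by (rule G1[OF delta_comp[OF delta_ij' df2]]) (auto simp: f2_def ij_def)
    moreover have "Xa 1 3 (f2 \<circ> ij 2) = mprod C P mu eta (pow P M 3) (map (proj C P M 3) [Suc 1..<Suc 3])"
      by (rule G1[OF delta_comp[OF delta_ij' df2]]) (auto simp: f2_def ij_def)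
    moreover have "[Suc 0..<Suc 1] = [1::nat]" "[Suc 1..<Suc 3] = [2,3::nat]" by (simp_all add: upt_rec)
    ultimately show ?thesis using Xa2[OF df2] by simp
  qed
  have PA1: "prod_arr C P mu (Id C M) = Xa 2 3 f1"
  proof -
    have "prod_arr C P mu (Id C M) = Pair P (Comp C mu (Pr1 P E M)) (Comp C (Id C M) (Pr2 P E M))"
      unfolding prod_arr_def domId domMu ..
    also have "\<dots> = Pair P (Comp C mu (Pr1 P E M)) c" using comp_id_l[OF pr2E] unfolding c_def by simp
    finally show ?thesis unfolding X1 p31 p32 p33 P1E .
  qed
  have PA2: "prod_arr C P (Id C M) mu = Xa 2 3 f2"
  proof -
    have "prod_arr C P (Id C M) mu = Pair P (Comp C (Id C M) (Pr1 P M E)) (Comp C mu (Pr2 P M E))"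
      unfolding prod_arr_def domId domMu E_def ..
    also have "\<dots> = Pair P (Pr1 P M E) (Comp C mu (Pr2 P M E))" using comp_id_l[OF p1ME] by simp
    finally show ?thesis unfolding X2 p31 p32 p33 e2 .
  qed
  have assoc: "Comp C mu (prod_arr C P mu (Id C M)) = Comp C mu (prod_arr C P (Id C M) mu)"
  proof -
    have "Comp C mu (prod_arr C P mu (Id C M)) = Xa 1 3 (f1 \<circ> d1)" unfolding PA1 using Xa_comp[OF dd1 df1] by simp
    also have "\<dots> = Xa 1 3 (f2 \<circ> d1)"
      by (rule Xa_cong[OF delta_comp[OF dd1 df1]]) (auto simp: f1_def f2_def d1_def)
    also have "\<dots> = Comp C mu (prod_arr C P (Id C M) mu)" unfolding PA2 using Xa_comp[OF dd1 df2] by simp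
    finally show ?thesis .
  qed
  have MT: "Prod P M (Term P) = M" "Prod P (Term P) M = M" "Pr2 P (Term P) M = Id C M" "Pr1 P M (Term P) = Id C M"
    using stc(2) Mo by auto
  have bM: "Bang P M \<in> hom C M (Term P)" using bang_hom[OF Mo] .
  have be: "Comp C eta (Bang P M) \<in> hom C M M" using comp_hom[OF bM eta_hom] .
  have idM: "Id C M \<in> hom C M M" using id_hom[OF Mo] .
  have p11: "proj C P M 1 1 = Id C M" by simp
  define s1 where "s1 = (\<lambda>i::nat. if i = 0 then 0 else (1::nat))"
  define s2 where "s2 = (\<lambda>i::nat. if i \<le> 1 then 0 else (1::nat))"
  have ds1: "delta_arr 2 1 s1" unfolding delta_arr_def s1_def by auto
  have ds2: "delta_arr 2 1 s2" unfolding delta_arr_def s2_def by auto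
  have S1: "Xa 2 1 s1 = Pair P (Id C M) (Comp C eta (Bang P M))"
  proof -
    have "Xa 1 1 (s1 \<circ> ij 1) = mprod C P mu eta (pow P M 1) (map (proj C P M 1) [Suc 0..<Suc 1])"
      by (rule G1[OF delta_comp[OF delta_ij' ds1]]) (auto simp: s1_def ij_def)
    moreover have "Xa 1 1 (s1 \<circ> ij 2) = mprod C P mu eta (pow P M 1) (map (proj C P M 1) [Suc 1..<Suc 1])"
      by (rule G1[OF delta_comp[OF delta_ij' ds1]]) (auto simp: s1_def ij_def)
    moreover have "[Suc 0..<Suc 1] = [1::nat]" by (simp add: upt_rec)
    ultimately show ?thesis using Xa2[OF ds1] by simp
  qed
  have S2: "Xa 2 1 s2 = Pair P (Comp C eta (Bang P M)) (Id C M)"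
  proof -
    have "Xa 1 1 (s2 \<circ> ij 1) = mprod C P mu eta (pow P M 1) (map (proj C P M 1) [Suc 0..<Suc 0])"
      by (rule G1[OF delta_comp[OF delta_ij' ds2]]) (auto simp: s2_def ij_def)
    moreover have "Xa 1 1 (s2 \<circ> ij 2) = mprod C P mu eta (pow P M 1) (map (proj C P M 1) [Suc 0..<Suc 1])"
      by (rule G1[OF delta_comp[OF delta_ij' ds2]]) (auto simp: s2_def ij_def)
    moreover have "[Suc 0..<Suc 1] = [1::nat]" by (simp add: upt_rec)
    ultimately show ?thesis using Xa2[OF ds2] by simp
  qed
  have U1: "prod_arr C P (Id C M) eta = Xa 2 1 s1"
  proof -
    have "Pr2 P M (Term P) = Bang P M" using pr2_hom[OF Mo term_obj] MT(1) by (intro bang_uniq) simp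
    then show ?thesis unfolding prod_arr_def domId domEta S1 MT(4) using comp_id_l[OF idM] by simp
  qed
  have U2: "prod_arr C P eta (Id C M) = Xa 2 1 s2"
  proof -
    have "Pr1 P (Term P) M = Bang P M" using pr1_hom[OF term_obj Mo] MT(2) by (intro bang_uniq) simp
    then show ?thesis unfolding prod_arr_def domId domEta S2 MT(3) using comp_id_l[OF idM] by simp
  qed
  have idd: "Xa 1 1 id = Id C M" using Xa_id[of 1] by simp
  have unit1: "Comp C mu (prod_arr C P (Id C M) eta) = Id C M"
  proof -
    have "Comp C mu (prod_arr C P (Id C M) eta) = Xa 1 1 (s1 \<circ> d1)" unfolding U1 using Xa_comp[OF dd1 ds1] by simp
    also have "\<dots> = Xa 1 1 id"
      by (rule Xa_cong[OF delta_comp[OF dd1 ds1]]) (auto simp: s1_def d1_def le_Suc_eq)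
    finally show ?thesis using idd by simp
  qed
  have unit2: "Comp C mu (prod_arr C P eta (Id C M)) = Id C M"
  proof -
    have "Comp C mu (prod_arr C P eta (Id C M)) = Xa 1 1 (s2 \<circ> d1)" unfolding U2 using Xa_comp[OF dd1 ds2] by simp
    also have "\<dots> = Xa 1 1 id"
      by (rule Xa_cong[OF delta_comp[OF dd1 ds2]]) (auto simp: s2_def d1_def le_Suc_eq)
    finally show ?thesis using idd by simp
  qed
  show ?thesis unfolding is_monoid_def
    using Mo mu_hom eta_hom assoc unit1 unit2 unfolding E_def by simp
qed

end


theorem proposition2p4:
  fixes C :: "('o,'a) category" and P :: "('o,'a) products"
    and Xo :: "nat \<Rightarrow> 'o" and Xa :: "nat \<Rightarrow> nat \<Rightarrow> (nat \<Rightarrow> nat) \<Rightarrow> 'a"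
  assumes "strict_cartesian C P"
    and "simplicial_object C Xo Xa"
  shows "is_reduced_bar C P Xo Xa \<longleftrightarrow>
           (\<forall>n. Xo n = pow P (Xo 1) n \<and> p_arr C P Xo Xa n = Id C (Xo n))"
proof
  have ccCP: "cc C P" using assms(1) unfolding strict_cartesian_def cc_def by blast
  assume "is_reduced_bar C P Xo Xa"
  then obtain M mu eta where m: "is_monoid C P M mu eta" "\<forall>n. Xo n = pow P M n"
    "\<forall>n m f. delta_arr n m f \<longrightarrow> Xa n m f = bar_arr C P M mu eta n m f"
    unfolding is_reduced_bar_def by blast
  show "\<forall>n. Xo n = pow P (Xo 1) n \<and> p_arr C P Xo Xa n = Id C (Xo n)"
    using cc.fwd[OF ccCP m] by blast
next
  assume H: "\<forall>n. Xo n = pow P (Xo 1) n \<and> p_arr C P Xo Xa n = Id C (Xo n)"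
  have bwI: "bw C P Xo Xa"
    using assms H unfolding bw_def bw_axioms_def cc_def strict_cartesian_def by blast
  show "is_reduced_bar C P Xo Xa"
    unfolding is_reduced_bar_def
    using bw.monoid[OF bwI] bw.Xo_pow[OF bwI] bw.Xa_bar[OF bwI] by blast
qed

end
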